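(* Let $\mu>0$, $u_a\in\mathbb{R}$, $\omega_0\ge0$, $\sigma_0\in\mathbb{R}$, and let $\alpha_l,\alpha_r,u_l,u_r$ be continuous functions on $[0,\infty)$ with $\alpha_l(t),\alpha_r(t)>0$ and $u_l(t)>u_r(t)$ for all $t\ge0$. Suppose $(\omega,\sigma)\in\mathcal{C}^1([0,\infty))^2$ solves $$\frac{d\omega}{dt}=(\alpha_r-\alpha_l)\sigma-(\alpha_ru_r-\alpha_lu_l),\quad \frac{d(\omega\sigma)}{dt}=(\alpha_ru_r-\alpha_lu_l)\sigma-(\alpha_ru_r^2-\alpha_lu_l^2)+\mu(u_a-\sigma)\omega,$$ with $\omega(0)=\omega_0$, $\sigma(0)\omega(0)=\sigma_0\omega_0$. If $u_r(t)<\sigma(t)<u_l(t)$ for all $t\ge0$, then $\omega(t_2)>\omega(t_1)$ whenever $t_2>t_1\ge0$. In particular, in the Riemann case $\alpha_l\equiv\alpha_->0$, $\alpha_r\equiv\alpha_+>0$, $u_l(t)=u_a+(u_--u_a)e^{-\mu t}$, $u_r(t)=u_a+(u_+-u_a)e^{-\mu t}$ with $u_->u_+$, one has $\omega(t)\ge\omega_0+\frac{K(1-e^{-\mu t})}{\mu}$ for all $t\ge0$, where $K=\min\{\alpha_-,\alpha_+\}(u_--u_+)$. *)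

theory Defs
  imports Complex_Main
begin

end

theory Submission
  imports Defs "HOL-Analysis.Analysis"
begin

theorem mainTheorem12:
  fixes \<mu> ua \<omega>0 \<sigma>0 :: real
    and \<alpha>l \<alpha>r ul ur \<omega> \<sigma> d\<omega> d\<sigma> :: "real \<Rightarrow> real"
  assumes mu_pos: "\<mu> > 0"
    and omega0_nonneg: "\<omega>0 \<ge> 0"
    and cont_data: "continuous_on {0..} \<alpha>l" "continuous_on {0..} \<alpha>r"
                   "continuous_on {0..} ul" "continuous_on {0..} ur"
    and alpha_pos: "\<And>t. t \<ge> 0 \<Longrightarrow> \<alpha>l t > 0 \<and> \<alpha>r t > 0"
    and ul_gt_ur: "\<And>t. t \<ge> 0 \<Longrightarrow> ul t > ur t"
    and C1: "continuous_on {0..} d\<omega>" "continuous_on {0..} d\<sigma>"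
    and der_omega: "\<And>t. t \<ge> 0 \<Longrightarrow> (\<omega> has_real_derivative d\<omega> t) (at t within {0..})"
    and der_sigma: "\<And>t. t \<ge> 0 \<Longrightarrow> (\<sigma> has_real_derivative d\<sigma> t) (at t within {0..})"
    and eq_omega: "\<And>t. t \<ge> 0 \<Longrightarrow>
        d\<omega> t = (\<alpha>r t - \<alpha>l t) * \<sigma> t - (\<alpha>r t * ur t - \<alpha>l t * ul t)"
    and eq_omega_sigma: "\<And>t. t \<ge> 0 \<Longrightarrow>
        ((\<lambda>s. \<omega> s * \<sigma> s) has_real_derivative
           ((\<alpha>r t * ur t - \<alpha>l t * ul t) * \<sigma> t - (\<alpha>r t * (ur t)\<^sup>2 - \<alpha>l t * (ul t)\<^sup>2)
            + \<mu> * (ua - \<sigma> t) * \<omega> t)) (at t within {0..})"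
    and init: "\<omega> 0 = \<omega>0" "\<sigma> 0 * \<omega> 0 = \<sigma>0 * \<omega>0"
    and sigma_between: "\<And>t. t \<ge> 0 \<Longrightarrow> ur t < \<sigma> t \<and> \<sigma> t < ul t"
  shows "(\<forall>t1 t2. 0 \<le> t1 \<and> t1 < t2 \<longrightarrow> \<omega> t1 < \<omega> t2) \<and>
         (\<forall>am ap um up. am > 0 \<longrightarrow> ap > 0 \<longrightarrow> um > up \<longrightarrow>
            (\<forall>t\<ge>0. \<alpha>l t = am \<and> \<alpha>r t = ap \<and>
                     ul t = ua + (um - ua) * exp (- \<mu> * t) \<and>
                     ur t = ua + (up - ua) * exp (- \<mu> * t)) \<longrightarrow>
            (\<forall>t\<ge>0. \<omega> t \<ge> \<omega>0 + min am ap * (um - up) * (1 - exp (- \<mu> * t)) / \<mu>))"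
proof -
  have atI: "\<And>x::real. x > 0 \<Longrightarrow> at x within {0..} = at x"
    by (rule at_within_interior) simp
  have contw: "continuous_on {0..} \<omega>"
    unfolding continuous_on_eq_continuous_within by (auto intro: DERIV_continuous der_omega)
  have dpos: "\<And>t. t \<ge> 0 \<Longrightarrow> d\<omega> t > 0"
  proof -
    fix t :: real assume t: "t \<ge> 0"
    have "d\<omega> t = \<alpha>r t * (\<sigma> t - ur t) + \<alpha>l t * (ul t - \<sigma> t)"
      using eq_omega[OF t] by (simp add: algebra_simps)
    moreover have "\<alpha>r t * (\<sigma> t - ur t) > 0" "\<alpha>l t * (ul t - \<sigma> t) > 0"
      using alpha_pos[OF t] sigma_between[OF t] by auto
    ultimately show "d\<omega> t > 0" by linarith
  qed
  have part1: "\<forall>t1 t2. 0 \<le> t1 \<and> t1 < t2 \<longrightarrow> \<omega> t1 < \<omega> t2"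
  proof (intro allI impI)
    fix t1 t2 :: real assume h: "0 \<le> t1 \<and> t1 < t2"
    show "\<omega> t1 < \<omega> t2"
    proof (rule DERIV_pos_imp_increasing_open[of t1 t2 \<omega>])
      show "t1 < t2" using h by simp
    next
      fix x assume "t1 < x" "x < t2"
      then have x: "x > 0" using h by simp
      show "\<exists>y. DERIV \<omega> x :> y \<and> y > 0"
        using der_omega[of x] dpos[of x] x atI[OF x] by auto
    next
      show "continuous_on {t1..t2} \<omega>"
        using h by (intro continuous_on_subset[OF contw]) auto
    qed
  qed
  have part2: "\<forall>am ap um up. am > 0 \<longrightarrow> ap > 0 \<longrightarrow> um > up \<longrightarrow>
            (\<forall>t\<ge>0. \<alpha>l t = am \<and> \<alpha>r t = ap \<and>
                     ul t = ua + (um - ua) * exp (- \<mu> * t) \<and>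
                     ur t = ua + (up - ua) * exp (- \<mu> * t)) \<longrightarrow>
            (\<forall>t\<ge>0. \<omega> t \<ge> \<omega>0 + min am ap * (um - up) * (1 - exp (- \<mu> * t)) / \<mu>)"
  proof (intro allI impI)
    fix am ap um up t :: real
    assume am: "am > 0" and ap: "ap > 0" and u: "um > up"
      and R: "\<forall>t\<ge>0. \<alpha>l t = am \<and> \<alpha>r t = ap \<and>
                     ul t = ua + (um - ua) * exp (- \<mu> * t) \<and>
                     ur t = ua + (up - ua) * exp (- \<mu> * t)"
      and t: "t \<ge> 0"
    define K where "K = min am ap * (um - up)"
    define g where "g = (\<lambda>s. \<omega> s - K * (1 - exp (- \<mu> * s)) / \<mu>)"
    have dg: "\<And>s. s \<ge> 0 \<Longrightarrow> (g has_real_derivative (d\<omega> s - K * exp (- \<mu> * s))) (at s within {0..})"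
    proof -
      fix s :: real assume s: "s \<ge> 0"
      have "((\<lambda>s. K * (1 - exp (- \<mu> * s)) / \<mu>) has_real_derivative K * (0 - exp (- \<mu> * s) * (- \<mu> * 1)) / \<mu>) (at s within {0..})"
        by (intro derivative_eq_intros) (use mu_pos in auto)
      then have "((\<lambda>s. K * (1 - exp (- \<mu> * s)) / \<mu>) has_real_derivative K * exp (- \<mu> * s)) (at s within {0..})"
        using mu_pos by simp
      from DERIV_diff[OF der_omega[OF s] this] show "?thesis s" unfolding g_def by simp
    qed
    have dgnn: "\<And>s. s \<ge> 0 \<Longrightarrow> d\<omega> s - K * exp (- \<mu> * s) \<ge> 0"
    proof -
      fix s :: real assume s: "s \<ge> 0"
      have e: "d\<omega> s = ap * (\<sigma> s - ur s) + am * (ul s - \<sigma> s)"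
      proof -
        have "\<alpha>l s = am" "\<alpha>r s = ap" using R s by auto
        then show ?thesis using eq_omega[OF s] by (simp add: algebra_simps)
      qed
      have "ap * (\<sigma> s - ur s) \<ge> min am ap * (\<sigma> s - ur s)"
        using sigma_between[OF s] by (intro mult_right_mono) auto
      moreover have "am * (ul s - \<sigma> s) \<ge> min am ap * (ul s - \<sigma> s)"
        using sigma_between[OF s] by (intro mult_right_mono) auto
      moreover have "ul s - ur s = (um - up) * exp (- \<mu> * s)"
      proof -
        have "ul s = ua + (um - ua) * exp (- \<mu> * s)" "ur s = ua + (up - ua) * exp (- \<mu> * s)"
          using R s by auto
        then show ?thesis by (simp add: algebra_simps)
      qed
      ultimately have "d\<omega> s \<ge> min am ap * ((um - up) * exp (- \<mu> * s))"
        using e by (smt (verit, ccfv_threshold) distrib_left)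
      then show "?thesis s" unfolding K_def by (simp add: mult.assoc)
    qed
    have "g 0 \<le> g t"
    proof (cases "t = 0")
      case True then show ?thesis by simp
    next
      case False
      show ?thesis
      proof (rule DERIV_nonneg_imp_increasing_open[of 0 t g])
        show "0 \<le> t" using t .
      next
        fix x :: real assume "0 < x" "x < t"
        then have x: "x > 0" by simp
        show "\<exists>y. DERIV g x :> y \<and> y \<ge> 0"
          using dg[of x] dgnn[of x] x atI[OF x] by auto
      next
        have "continuous_on {0..} g"
          unfolding continuous_on_eq_continuous_within by (auto intro: DERIV_continuous dg)
        then show "continuous_on {0..t} g"
          by (rule continuous_on_subset) auto
      qed
    qed
    then show "\<omega> t \<ge> \<omega>0 + min am ap * (um - up) * (1 - exp (- \<mu> * t)) / \<mu>"
      unfolding g_def K_def using init(1) by simp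
  qed
  show ?thesis using part1 part2 by blast
qed

end
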